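(* Consider the approximate power-flow model $\mathbf{q}=\operatorname{diag}(\mathbf{v})\mathbf{B}\mathbf{v}$, partitioned into generator (G) and load (L) buses as $$\begin{bmatrix}\mathbf{q}_G\\ \mathbf{q}_L\end{bmatrix}=\begin{bmatrix}\operatorname{diag}(\mathbf{v}_G)&\mathbf{0}\\ \mathbf{0}&\operatorname{diag}(\mathbf{v}_L)\end{bmatrix}\begin{bmatrix}\mathbf{B}_{GG}&\mathbf{B}_{LG}^\top\\ \mathbf{B}_{LG}&\mathbf{B}_{LL}\end{bmatrix}\begin{bmatrix}\mathbf{v}_G\\ \mathbf{v}_L\end{bmatrix}.$$ For control input $\mathbf{u}=[\mathbf{q}_L^\top~~\mathbf{v}_G^\top]^\top$ and output $\mathbf{y}=\mathbf{v}_L$, the mapping $\mathbf{y}=\mathrm{F}(\mathbf{u})$ implicitly defined by this model satisfies $\nabla_{\mathbf{u}}\mathrm{F}(\mathbf{u})\geq\mathbf{0}$ (entrywise) if $\operatorname{diag}(\mathbf{g}_L)+\mathbf{B}_{LL}\succ 0$, where $\mathbf{g}_L:=[\operatorname{diag}(\mathbf{v}_L)]^{-2}\mathbf{q}_L$.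
   Context: An electric power network is modeled by a graph $\mathcal{G}=(\mathcal{N},\mathcal{E})$ with edges being transmission lines; buses are partitioned into generator (PV) buses $\mathcal{N}_G$ and load (PQ) buses $\mathcal{N}_L$. $v_n$ and $q_n$ denote voltage magnitude and reactive power injection at bus $n$; vectors $\mathbf{v},\mathbf{q}$ stack them, with subscripts $G$, $L$ denoting the generator and load sub-vectors. $\mathbf{B}\in\mathbb{R}^{N\times N}$ is a weighted Laplacian of $\mathcal{G}$: $B_{mn}<0$ equals the negative susceptance of line $(m,n)\in\mathcal{E}$, $B_{mn}=0$ if $(m,n)\notin\mathcal{E}$, and $B_{mm}=-\sum_{n\neq m}B_{mn}>0$; it is partitioned into blocks $\mathbf{B}_{GG},\mathbf{B}_{LG},\mathbf{B}_{LL}$ accordingly. Voltages are positive, $\mathbf{v}_L>\mathbf{0}$. The symbol $\succ 0$ for a matrix means all its eigenvalues are real and positive. Inequalities between vectors/matrices are entrywise. *)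

theory Defs
  imports "HOL-Analysis.Analysis"
begin

definition weighted_laplacian :: "real^'n^'n \<Rightarrow> bool" where
  "weighted_laplacian B \<longleftrightarrow>
     (\<forall>m n. B $ m $ n = B $ n $ m) \<and>
     (\<forall>m n. m \<noteq> n \<longrightarrow> B $ m $ n \<le> 0) \<and>
     (\<forall>m. B $ m $ m = - (\<Sum>n\<in>UNIV - {m}. B $ m $ n))"

text \<open>M \<succ> 0: every (complex) eigenvalue of M is real and positive.\<close>
definition eig_pos :: "real^'n^'n \<Rightarrow> bool" where
  "eig_pos M \<longleftrightarrow>
     (\<forall>(c::complex) (x::complex^'n). x \<noteq> 0 \<and>
        (\<chi> i j. complex_of_real (M $ i $ j)) *v x = c *s x \<longrightarrow>
        c \<in> \<real> \<and> Re c > 0)"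

definition diagm :: "real^'n \<Rightarrow> real^'n^'n" where
  "diagm d = (\<chi> i j. if i = j then d $ i else 0)"

text \<open>Blocks of B indexed by 'g + 'l (Inl = generator buses, Inr = load buses).\<close>
definition blk_LL :: "real^('g::finite+'l::finite)^('g+'l) \<Rightarrow> real^'l^'l" where
  "blk_LL B = (\<chi> i j. B $ Inr i $ Inr j)"

definition blk_LG :: "real^('g::finite+'l::finite)^('g+'l) \<Rightarrow> real^'g^'l" where
  "blk_LG B = (\<chi> i j. B $ Inr i $ Inl j)"

text \<open>Control input u = [q_L; v_G], indexed by 'l + 'g.\<close>
definition qL_of :: "real^('l::finite+'g::finite) \<Rightarrow> real^'l" where
  "qL_of u = (\<chi> i. u $ Inl i)"

definition vG_of :: "real^('l::finite+'g::finite) \<Rightarrow> real^'g" where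
  "vG_of u = (\<chi> j. u $ Inr j)"

end

theory Submission
  imports Defs
begin
lemma ratio:
  fixes M :: "real^'n^'n"
  assumes Z: "\<forall>i j. i \<noteq> j \<longrightarrow> M$i$j \<le> 0"
  and zpos: "\<forall>i. z$i > 0" and Mz: "\<forall>i. (M *v z)$i + t * z$i > 0"
  and Mx: "\<forall>i. (M *v x)$i + t * x$i \<ge> 0"
  shows "\<forall>i. x$i \<ge> 0"
proof (rule ccontr)
  assume "\<not> ?thesis"
  then obtain k where k: "x$k < 0" by (meson not_le)
  define c where "c = Min (range (\<lambda>i. x$i / z$i))"
  have fin: "finite (range (\<lambda>i. x$i / z$i))" by simp
  have cle: "\<And>i. c \<le> x$i / z$i" unfolding c_def by (rule Min_le[OF fin]) simp
  have "c \<in> range (\<lambda>i. x$i / z$i)" unfolding c_def by (rule Min_in[OF fin]) simp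
  then obtain i0 where i0: "c = x$i0/z$i0" by auto
  have cneg: "c < 0" using cle[of k] k zpos by (smt (verit) divide_neg_pos)
  define y where "y = x - c *\<^sub>R z"
  have ynn: "y$j \<ge> 0" for j
  proof -
    have "c * z$j \<le> x$j" using cle[of j] zpos by (simp add: pos_le_divide_eq)
    then show ?thesis by (simp add: y_def)
  qed
  have y0: "y$i0 = 0" using zpos[rule_format, of i0] by (simp add: y_def i0)
  have "(M *v y)$i0 \<le> 0"
    unfolding matrix_vector_mult_def
    apply simp
    apply (rule sum_nonpos)
    using Z ynn y0 by (metis mult_nonpos_nonneg mult_zero_right)
  moreover have "(M *v y)$i0 + t*y$i0 = ((M *v x)$i0 + t*x$i0) - c * ((M *v z)$i0 + t*z$i0)"
    by (simp add: y_def matrix_vector_mult_def algebra_simps sum_subtractf sum_distrib_left)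
  moreover have "c * ((M *v z)$i0 + t*z$i0) < 0" using cneg Mz by (simp add: mult_neg_pos)
  ultimately show False using Mx[rule_format, of i0] y0 by simp
qed

lemma cvec_mult:
  fixes M :: "real^'n^'n"
  shows "(\<chi> i j. complex_of_real (M $ i $ j)) *v (\<chi> i. complex_of_real (x$i))
     = (\<chi> i. complex_of_real ((M *v x)$i))"
  by (simp add: matrix_vector_mult_def vec_eq_iff)

lemma nonsing:
  fixes M :: "real^'n^'n"
  assumes E: "eig_pos M" and t: "t \<ge> 0"
  shows "\<exists>x. \<forall>i. (M *v x)$i + t * x$i = b$i"
proof -
  define f where "f = (\<lambda>x. M *v x + t *\<^sub>R x)"
  have lin: "linear f" unfolding f_def
    by (rule linearI) (simp_all add: matrix_vector_right_distrib matrix_vector_mult_scaleR scaleR_add_right)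
  have "inj f"
  proof (rule linear_injective_0[OF lin, THEN iffD2], intro allI impI)
    fix x assume fx0: "f x = 0"
    have fx: "(M *v x)$i = - t * x$i" for i
    proof -
      have "(M *v x + t *\<^sub>R x)$i = 0" using fx0 by (simp add: f_def)
      then show ?thesis by simp
    qed
    show "x = 0"
    proof (rule ccontr)
      assume nz: "x \<noteq> 0"
      define xc where "xc = (\<chi> i. complex_of_real (x$i))"
      have a: "xc \<noteq> 0" using nz by (auto simp: xc_def vec_eq_iff)
      have b: "(\<chi> i j. complex_of_real (M $ i $ j)) *v xc = complex_of_real (-t) *s xc"
        unfolding xc_def cvec_mult by (simp add: vec_eq_iff fx)
      have "Re (complex_of_real (-t)) > 0" 
        using E[unfolded eig_pos_def, rule_format, OF conjI[OF a b]] by simp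
      then show False using t by simp
    qed
  qed
  then have "surj f" using lin linear_injective_imp_surjective by blast
  then obtain x where "f x = b" by (metis surjD)
  then show ?thesis by (auto simp: f_def)
qed

lemma Zinv:
  fixes M :: "real^'n^'n"
  assumes Z: "\<forall>i j. i \<noteq> j \<longrightarrow> M$i$j \<le> 0" and E: "eig_pos M"
  and Mx: "\<forall>i. (M *v x)$i \<ge> 0"
  shows "\<forall>i. x$i \<ge> 0"
proof -
  define one :: "real^'n" where "one = (\<chi> i. 1)"
  define Q where "Q t \<longleftrightarrow> (\<exists>z::real^'n. (\<forall>i. z$i > 0) \<and> (\<forall>i. (M *v z)$i + t * z$i > 0))" for t
  have mono: "Q t'" if "Q t" "t \<le> t'" for t t'
  proof -
    from that obtain z where z: "\<forall>i. z$i > 0" "\<forall>i. (M *v z)$i + t * z$i > 0" unfolding Q_def by blast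
    have "(M *v z)$i + t' * z$i > 0" for i
    proof -
      have "t * z$i \<le> t' * z$i" using z(1) that(2) by (simp add: mult_right_mono less_imp_le)
      then show ?thesis using z(2) by (smt (verit))
    qed
    then show ?thesis using z(1) unfolding Q_def by blast
  qed
  have large: "Q ((\<Sum>i\<in>UNIV. \<Sum>j\<in>UNIV. \<bar>M$i$j\<bar>) + 1)" (is "Q ?T")
  proof -
    define z where "z = one"
    have "(M *v z)$i + ?T * z$i > 0" for i
    proof -
      have "\<bar>(M *v z)$i\<bar> \<le> (\<Sum>j\<in>UNIV. \<bar>M$i$j\<bar>)"
        by (simp add: z_def one_def matrix_vector_mult_def sum_abs)
      also have "\<dots> \<le> (\<Sum>i\<in>UNIV. \<Sum>j\<in>UNIV. \<bar>M$i$j\<bar>)"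
        by (rule member_le_sum) (auto intro: sum_nonneg)
      finally show ?thesis by (simp add: z_def one_def)
    qed
    then show ?thesis unfolding Q_def by (intro exI[of _ z]) (auto simp: z_def one_def)
  qed
  have Tnn: "?T \<ge> 0" by (simp add: sum_nonneg add_nonneg_nonneg)
  have openQ: "\<exists>t'. 0 \<le> t' \<and> t' < t \<and> Q t'" if "Q t" "t > 0" for t
  proof -
    from that obtain z where z: "\<forall>i. z$i > 0" "\<forall>i. (M *v z)$i + t * z$i > 0" unfolding Q_def by blast
    define m where "m = Min (range (\<lambda>i. (M *v z)$i + t * z$i))"
    have fin: "finite (range (\<lambda>i. (M *v z)$i + t * z$i))" by simp
    have mle: "m \<le> (M *v z)$i + t * z$i" for i unfolding m_def by (rule Min_le[OF fin]) simp
    have "m \<in> range (\<lambda>i. (M *v z)$i + t * z$i)" unfolding m_def by (rule Min_in[OF fin]) simp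
    then have mpos: "m > 0" using z(2) by auto
    define d where "d = min t (m / (norm z + 1))"
    have dpos: "d > 0" using mpos that(2) by (simp add: d_def add_nonneg_pos)
    have "(M *v z)$i + (t - d) * z$i > 0" for i
    proof -
      have "d * z$i \<le> (m / (norm z + 1)) * z$i" using z(1) by (intro mult_right_mono) (auto simp: d_def less_imp_le)
      also have "\<dots> \<le> (m / (norm z + 1)) * norm z"
        using mpos by (intro mult_left_mono) (auto intro: order_trans[OF abs_ge_self component_le_norm_cart] less_imp_le)
      also have "\<dots> < m"
      proof -
        have "(m / (norm z + 1)) * norm z = m * (norm z / (norm z + 1))" by simp
        also have "\<dots> < m * 1" using mpos by (intro mult_strict_left_mono) (auto simp: divide_less_eq add_nonneg_pos)
        finally show ?thesis by simp
      qed
      finally show ?thesis using mle[of i] by (simp add: algebra_simps)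
    qed
    then have "Q (t - d)" using z(1) unfolding Q_def by blast
    moreover have "0 \<le> t - d" by (simp add: d_def)
    ultimately show ?thesis using dpos by (intro exI[of _ "t - d"]) auto
  qed
  have closeQ: "Q t0" if t0nn: "t0 \<ge> 0" and allQ: "\<forall>t>t0. Q t" for t0
  proof -
    obtain x0 where x0: "\<forall>i. (M *v x0)$i + t0 * x0$i = one$i"
      using nonsing[OF E t0nn] by blast
    define t where "t = t0 + 1 / (norm x0 + 1)"
    have "Q t" using allQ by (simp add: t_def add_nonneg_pos)
    then obtain z where z: "\<forall>i. z$i > 0" "\<forall>i. (M *v z)$i + t * z$i > 0" unfolding Q_def by blast
    have "(M *v x0)$i + t * x0$i \<ge> 0" for i
    proof -
      have "\<bar>x0$i\<bar> / (norm x0 + 1) \<le> 1"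
        using component_le_norm_cart[of x0 i] by (simp add: divide_le_eq)
      then have "x0$i / (norm x0 + 1) \<ge> -1" by (smt (verit) divide_minus_left abs_divide abs_of_pos norm_ge_zero abs_le_iff)
      then show ?thesis using x0[rule_format, of i] by (simp add: t_def one_def algebra_simps)
    qed
    then have x0nn: "\<forall>i. x0$i \<ge> 0" using ratio[OF Z z] by blast
    define e where "e = 1 / (norm (M *v one) + 1)"
    have epos: "e > 0" unfolding e_def by (simp add: add_nonneg_pos)
    define w where "w = x0 + e *\<^sub>R one"
    have "(M *v w)$i + t0 * w$i > 0" for i
    proof -
      have "(M *v w)$i + t0 * w$i = 1 + e * ((M *v one)$i + t0)"
        using x0[rule_format, of i]
        by (simp add: w_def one_def matrix_vector_mult_def algebra_simps sum.distrib sum_distrib_left)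
      moreover have "e * \<bar>(M *v one)$i\<bar> < 1"
      proof -
        have "\<bar>(M *v one)$i\<bar> \<le> norm (M *v one)"
          by (rule component_le_norm_cart)
        then show ?thesis by (simp add: e_def divide_less_eq)
      qed
      moreover have "e * t0 \<ge> 0" using epos t0nn by simp
      ultimately show ?thesis using epos
        by (smt (verit) abs_mult abs_of_pos mult_minus_right abs_ge_minus_self distrib_left)
    qed
    moreover have "w$i > 0" for i using x0nn epos by (simp add: w_def one_def add_nonneg_pos)
    ultimately show ?thesis unfolding Q_def by blast
  qed
  have Q0: "Q 0"
  proof (rule ccontr)
    assume nQ0: "\<not> Q 0"
    define S where "S = {t. 0 \<le> t \<and> Q t}"
    define t0 where "t0 = Inf S"
    have Sne: "?T \<in> S" using large Tnn by (simp add: S_def)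
    have bdd: "bdd_below S" unfolding S_def by (rule bdd_belowI[of _ 0]) auto
    have t0nn: "t0 \<ge> 0" unfolding t0_def using Sne by (intro cInf_greatest) (auto simp: S_def)
    have "\<forall>t>t0. Q t"
    proof (intro allI impI)
      fix t assume "t > t0"
      then obtain s where "s \<in> S" "s < t" using cInf_less_iff[of S t] Sne bdd unfolding t0_def by blast
      then show "Q t" using mono by (auto simp: S_def)
    qed
    then have Qt0: "Q t0" using closeQ t0nn by blast
    show False
    proof (cases "t0 = 0")
      case True then show ?thesis using Qt0 nQ0 by simp
    next
      case False
      then obtain t' where "0 \<le> t'" "t' < t0" "Q t'" using openQ[OF Qt0] t0nn by auto
      then have "t' \<in> S" by (simp add: S_def)
      then have "t0 \<le> t'" unfolding t0_def using bdd by (rule cInf_lower)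
      then show False using \<open>t' < t0\<close> by simp
    qed
  qed
  then obtain z where z: "\<forall>i. z$i > 0" "\<forall>i. (M *v z)$i + 0 * z$i > 0" unfolding Q_def by blast
  show ?thesis using ratio[OF Z z, of x] Mx by simp
qed

theorem proposition1:
  fixes B :: "real^('g::finite + 'l::finite)^('g + 'l)"
    and F :: "real^('l + 'g) \<Rightarrow> real^'l"
    and U :: "(real^('l + 'g)) set"
    and u0 :: "real^('l + 'g)"
  assumes lap: "weighted_laplacian B"
    and U_open: "open U" and u0U: "u0 \<in> U"
    and pos: "\<forall>u\<in>U. \<forall>i. F u $ i > 0"
    and model: "\<forall>u\<in>U. qL_of u =
                   diagm (F u) *v (blk_LG B *v vG_of u + blk_LL B *v F u)"
    and diff: "F differentiable (at u0)"
    and cond: "eig_pos (diagm (\<chi> i. qL_of u0 $ i / (F u0 $ i)^2) + blk_LL B)"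
  shows "\<forall>i j. jacobian F (at u0) $ i $ j \<ge> 0"
proof (intro allI)
  fix i0 k
  define J where "J = jacobian F (at u0)"
  have Fd: "(F has_derivative (\<lambda>h. J *v h)) (at u0)"
    using diff jacobian_works unfolding J_def by blast
  have offd: "B $ m $ n \<le> 0" if "m \<noteq> n" for m n
    using lap that unfolding weighted_laplacian_def by blast
  define S where "S = (\<lambda>i u. (\<Sum>j\<in>UNIV. B $ Inr i $ Inl j * u $ Inr j) + (\<Sum>j\<in>UNIV. B $ Inr i $ Inr j * F u $ j))"
  have comp: "u $ Inl i = F u $ i * S i u" if "u \<in> U" for u i
  proof -
    have "qL_of u $ i = (diagm (F u) *v (blk_LG B *v vG_of u + blk_LL B *v F u)) $ i"
      using model that by simp
    then show ?thesis
      by (simp add: S_def qL_of_def vG_of_def diagm_def blk_LG_def blk_LL_def matrix_vector_mult_def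
          if_distrib[of "\<lambda>z. z * c" for c] sum.delta cong: if_cong)
  qed
  have Fi: "((\<lambda>u. F u $ j) has_derivative (\<lambda>h. (J *v h) $ j)) (at u0)" for j
    using bounded_linear.has_derivative[OF bounded_linear_vec_nth Fd] .
  have ident: "h $ Inl i = (J *v h) $ i * S i u0 + F u0 $ i *
     ((\<Sum>j\<in>UNIV. B $ Inr i $ Inl j * h $ Inr j) + (\<Sum>j\<in>UNIV. B $ Inr i $ Inr j * (J *v h) $ j))" for i h
  proof -
    define D where "D = (\<lambda>h. (J *v h) $ i * S i u0 + F u0 $ i *
     ((\<Sum>j\<in>UNIV. B $ Inr i $ Inl j * h $ Inr j) + (\<Sum>j\<in>UNIV. B $ Inr i $ Inr j * (J *v h) $ j)))"
    have dS: "(S i has_derivative (\<lambda>h. (\<Sum>j\<in>UNIV. B $ Inr i $ Inl j * h $ Inr j) + (\<Sum>j\<in>UNIV. B $ Inr i $ Inr j * (J *v h) $ j))) (at u0)"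
      unfolding S_def
      by (intro has_derivative_add has_derivative_sum
          bounded_linear.has_derivative[OF bounded_linear_mult_right Fi]
          bounded_linear.has_derivative[OF bounded_linear_mult_right
             bounded_linear.has_derivative[OF bounded_linear_vec_nth has_derivative_ident]])
    have d1: "((\<lambda>u. F u $ i * S i u) has_derivative D) (at u0)"
      using has_derivative_mult[OF Fi[of i] dS] unfolding D_def by (simp add: algebra_simps)
    have d2: "((\<lambda>u. F u $ i * S i u) has_derivative (\<lambda>h. h $ Inl i)) (at u0)"
    proof -
      have L: "((\<lambda>u. u $ Inl i) has_derivative (\<lambda>h. h $ Inl i)) (at u0)"
        by (rule bounded_linear.has_derivative[OF bounded_linear_vec_nth has_derivative_ident])
      show ?thesis
        by (rule has_derivative_transform_within_open[OF L U_open u0U]) (simp add: comp)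
    qed
    have DD: "D = (\<lambda>h. h $ Inl i)" using has_derivative_unique[OF d1 d2] .
    then show ?thesis unfolding D_def by (metis (no_types, lifting))
  qed
  define h :: "real^('l + 'g)" where "h = axis k 1"
  define x where "x = J *v h"
  have xJ: "x $ i' = J $ i' $ k" for i'
    by (simp add: x_def h_def matrix_vector_mult_basis column_def)
  define M where "M = diagm (\<chi> i. qL_of u0 $ i / (F u0 $ i)^2) + blk_LL B"
  have MZ: "\<forall>i j. i \<noteq> j \<longrightarrow> M$i$j \<le> 0"
    by (auto simp: M_def diagm_def blk_LL_def intro: offd)
  have Mx: "\<forall>i. (M *v x) $ i \<ge> 0"
  proof
    fix i
    define y where "y = F u0 $ i"
    define SG where "SG = (\<Sum>j\<in>UNIV. B $ Inr i $ Inl j * h $ Inr j)"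
    define SL where "SL = (\<Sum>j\<in>UNIV. B $ Inr i $ Inr j * x $ j)"
    define a where "a = S i u0"
    have ypos: "y > 0" using pos u0U by (simp add: y_def)
    have E: "h $ Inl i = x $ i * a + y * (SG + SL)"
      using ident[of h i] by (simp add: x_def y_def SG_def SL_def a_def)
    have q: "u0 $ Inl i = y * a" using comp[OF u0U] by (simp add: y_def a_def)
    have hL: "h $ Inl i \<ge> 0" by (simp add: h_def axis_def)
    have SGn: "SG \<le> 0" unfolding SG_def
      by (rule sum_nonpos) (auto simp: h_def axis_def intro: offd)
    have Mxi: "(M *v x) $ i = u0 $ Inl i / y^2 * x $ i + SL"
      by (simp add: M_def diagm_def blk_LL_def qL_of_def SL_def y_def matrix_vector_mult_def
          distrib_right sum.distrib if_distrib[of "\<lambda>z. z * c" for c] sum.delta cong: if_cong)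
    have "u0 $ Inl i / y^2 * x $ i + SL = (h $ Inl i - y * SG) / y"
      using ypos by (simp add: q E field_simps power2_eq_square)
    also have "\<dots> \<ge> 0"
    proof -
      have "y * SG \<le> 0" using ypos SGn by (simp add: mult_nonneg_nonpos)
      then show ?thesis using ypos hL by (intro divide_nonneg_pos) auto
    qed
    finally show "(M *v x) $ i \<ge> 0" using Mxi by simp
  qed
  have "\<forall>i. x $ i \<ge> 0" using Zinv[OF MZ _ Mx] cond unfolding M_def by blast
  then show "J $ i0 $ k \<ge> 0" using xJ by simp
qed
end
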